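(* Let $\alpha\in\mathbb C$ and let $u(k),v(k),f(k),g(k)$, $k\ge0$, be defined by $u(0)=v(0)=0$, $f(0)=g(0)=1$ and, for $k\ge1$, $u(k)=u(k-1)+f(k-1)$, $v(k)=v(k-1)+g(k-1)$, $f(k)=\frac{u(k)}{v(k)}g(k-1)$, $g(k)=\frac{\alpha v(k)}{k-\alpha u(k)/f(k-1)-\alpha v(k)/g(k-1)}$. Put $h(k)=(f(k)g(k))^{-1}$ and $w(0)=0$, $w(k)=w(k-1)+h(k-1)$ for $k\ge1$. Then, for all $k$ such that the arguments are nonnegative integers, $$w(3k-1)=\frac{k-1+2\alpha}{1-2\alpha}\Pi_3(k),\quad w(3k)=\frac{k}{1-2\alpha}\Pi_3(k),\quad w(3k+1)=\frac{k+1-2\alpha}{1-2\alpha}\Pi_3(k),$$ $$h(3k-1)=h(3k)=\Pi_3(k),\qquad h(3k+1)=\frac{k+1-2\alpha}{k+\alpha}\Pi_3(k),$$ where $$\Pi_3(k)=\frac{(1-\alpha)(2-\alpha)\cdots(k-\alpha)}{\alpha(1+\alpha)\cdots(k-1+\alpha)}\cdot\frac{(1-2\alpha)(2-2\alpha)\cdots(k-2\alpha)}{2\alpha(1+2\alpha)\cdots(k-1+2\alpha)}.$$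
   Context: Empty products equal $1$ (so $\Pi_3(0)=1$). The parameter $\alpha$ is such that all denominators occurring are nonzero. *)

theory Defs
  imports Complex_Main
begin

fun ufvg :: "complex \<Rightarrow> nat \<Rightarrow> complex \<times> complex \<times> complex \<times> complex" where
  "ufvg a 0 = (0, 0, 1, 1)"
| "ufvg a (Suc n) =
     (case ufvg a n of (u, v, f, g) \<Rightarrow>
        let u' = u + f; v' = v + g;
            f' = u' / v' * g;
            g' = a * v' / (of_nat (Suc n) - a * u' / f - a * v' / g)
        in (u', v', f', g'))"

definition useq :: "complex \<Rightarrow> nat \<Rightarrow> complex" where
  "useq a k = fst (ufvg a k)"
definition vseq :: "complex \<Rightarrow> nat \<Rightarrow> complex" where
  "vseq a k = fst (snd (ufvg a k))"
definition fseq :: "complex \<Rightarrow> nat \<Rightarrow> complex" where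
  "fseq a k = fst (snd (snd (ufvg a k)))"
definition gseq :: "complex \<Rightarrow> nat \<Rightarrow> complex" where
  "gseq a k = snd (snd (snd (ufvg a k)))"

text \<open>Denominator occurring in the definition of g(k), for k \<ge> 1 (argument k = Suc n).\<close>
definition gden :: "complex \<Rightarrow> nat \<Rightarrow> complex" where
  "gden a k = of_nat k - a * useq a k / fseq a (k - 1) - a * vseq a k / gseq a (k - 1)"

definition hseq :: "complex \<Rightarrow> nat \<Rightarrow> complex" where
  "hseq a k = inverse (fseq a k * gseq a k)"

fun wseq :: "complex \<Rightarrow> nat \<Rightarrow> complex" where
  "wseq a 0 = 0"
| "wseq a (Suc n) = wseq a n + hseq a n"

definition Pi3 :: "complex \<Rightarrow> nat \<Rightarrow> complex" where
  "Pi3 a k = (\<Prod>j\<in>{1..k}. of_nat j - a) / (\<Prod>j<k. of_nat j + a)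
           * ((\<Prod>j\<in>{1..k}. of_nat j - 2 * a) / (\<Prod>j<k. of_nat j + 2 * a))"

end

theory Submission
  imports Defs
begin

definition Fp :: "complex \<Rightarrow> nat \<Rightarrow> complex" where
  "Fp a k = (\<Prod>j<k. of_nat j + 2*a) / (\<Prod>j\<in>{1..k}. of_nat j - a)"
definition Gp :: "complex \<Rightarrow> nat \<Rightarrow> complex" where
  "Gp a k = (\<Prod>j<k. of_nat j + a) / (\<Prod>j\<in>{1..k}. of_nat j - 2*a)"

lemma Fp_Suc: "Fp a (Suc k) = Fp a k * (of_nat k + 2*a) / (of_nat (Suc k) - a)"
  by (simp add: Fp_def prod.nat_ivl_Suc' field_simps)

lemma Gp_Suc: "Gp a (Suc k) = Gp a k * (of_nat k + a) / (of_nat (Suc k) - 2*a)"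
  by (simp add: Gp_def prod.nat_ivl_Suc' field_simps)

lemma Pi3_FG: "Pi3 a k = inverse (Fp a k * Gp a k)"
  by (simp add: Pi3_def Fp_def Gp_def field_simps)

lemma ufvg_Suc_eq: "ufvg a n = (u, v, f, g) \<Longrightarrow>
   ufvg a (Suc n) = (u + f, v + g, (u + f) / (v + g) * g,
      a * (v + g) / (of_nat (Suc n) - a * (u + f) / f - a * (v + g) / g))"
  by (simp add: Let_def)

declare ufvg.simps(2)[simp del]

lemma alg1: fixes x a P :: complex
  assumes "x+a\<noteq>0" "x+2*a\<noteq>0" "1-2*a\<noteq>0"
  shows "x/(1-2*a)*P + P + (x+1-2*a)/(x+a)*P + P*(x+1-a)*(x+1-2*a)/((x+a)*(x+2*a)) = (x+1)/(1-2*a) * (P*(x+1-a)*(x+1-2*a)/((x+a)*(x+2*a)))"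
  using assms by (simp add: divide_simps) algebra
lemma alg2: fixes x a P :: complex
  assumes "x+a\<noteq>0" "x+2*a\<noteq>0" "1-2*a\<noteq>0"
  shows "(x+1-2*a)/(1-2*a)*P + (x+1-2*a)/(x+a)*P = (x+2*a)/(1-2*a) * (P*(x+1-a)*(x+1-2*a)/((x+a)*(x+2*a)))"
  using assms by (simp add: divide_simps) algebra

lemma main:
  fixes a :: complex
  assumes v_nz: "\<And>k. k \<ge> 1 \<Longrightarrow> vseq a k \<noteq> 0"
      and f_nz: "\<And>k. fseq a k \<noteq> 0"
      and g_nz: "\<And>k. gseq a k \<noteq> 0"
      and gden_nz: "\<And>k. k \<ge> 1 \<Longrightarrow> gden a k \<noteq> 0"
      and d2: "\<And>j::nat. of_nat j + a \<noteq> 0"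
  shows "ufvg a (3*k) = (of_nat k / a * Fp a k, of_nat k / a * Gp a k, Fp a k, Gp a k)
       \<and> ufvg a (3*k+1) = ((of_nat k + a) / a * Fp a k, (of_nat k + a) / a * Gp a k, Fp a k, Gp a (Suc k))
       \<and> ufvg a (3*k+2) = ((of_nat k + 2*a) / a * Fp a k, (of_nat k + 1 - a) / a * Gp a (Suc k), Fp a (Suc k), Gp a (Suc k))"
proof (induction k)
  case 0
  have a0: "a \<noteq> 0" using d2[of 0] by simp
  have e0: "ufvg a 0 = (0,0,1,1)" by simp
  have e1: "ufvg a 1 = (1, 1, 1, a / (1 - 2*a))"
    using ufvg_Suc_eq[OF e0] by (simp add: field_simps)
  have "gden a 1 = 1 - 2*a" using e0 e1 by (simp add: gden_def useq_def vseq_def fseq_def gseq_def)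
  hence d: "1 - 2*a \<noteq> 0" using gden_nz[of 1] by simp
  have G1: "Gp a 1 = a / (1 - 2*a)" by (simp add: Gp_def)
  have F1: "Fp a 1 = 2*a / (1 - a)" by (simp add: Fp_def)
  have e1': "ufvg a (Suc 0) = (1, 1, 1, a / (1 - 2*a))" using e1 by simp
  have e2: "ufvg a 2 = (2, 1 + a/(1-2*a), 2 / (1 + a/(1-2*a)) * (a/(1-2*a)),
      a * (1 + a/(1-2*a)) / (2 - a * 2 - a * (1 + a/(1-2*a)) / (a/(1-2*a))))"
    using ufvg_Suc_eq[OF e1'] by (simp add: numeral_2_eq_2)
  have v2: "1 + a/(1-2*a) = (1 - a)/(1-2*a)" using d by (simp add: field_simps)
  have "vseq a 2 \<noteq> 0" using v_nz[of 2] by simp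
  hence a1: "1 - a \<noteq> 0" using e2 v2 by (simp add: vseq_def)
  have f2: "2 / (1 + a/(1-2*a)) * (a/(1-2*a)) = 2*a/(1-a)"
    using d a1 v2 by (simp add: divide_simps)
  have dd: "2 - a * 2 - a * (1 + a/(1-2*a)) / (a/(1-2*a)) = 1 - a"
    using d a1 a0 v2 by (simp add: field_simps)
  have g2: "a * (1 + a/(1-2*a)) / (2 - a * 2 - a * (1 + a/(1-2*a)) / (a/(1-2*a))) = a/(1-2*a)"
    unfolding dd v2 using d a1 a0 by (simp add: divide_simps)
  have e2': "ufvg a (Suc (Suc 0)) = (2, (1-a)/(1-2*a), 2*a/(1-a), a/(1-2*a))"
    using e2 unfolding f2 g2 unfolding v2 numeral_2_eq_2 .
  have c1: "(of_nat 0 + 2*a) / a * Fp a 0 = 2" using a0 by (simp add: Fp_def)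
  have c2: "(of_nat 0 + 1 - a) / a * Gp a (Suc 0) = (1-a)/(1-2*a)" using a0 G1 by simp
  have c3: "ufvg a (3*0+1) = ((of_nat 0 + a) / a * Fp a 0, (of_nat 0 + a) / a * Gp a 0, Fp a 0, Gp a (Suc 0))"
    using e1 a0 G1 by (simp add: Fp_def Gp_def)
  show ?case using e2' c1 c2 c3 F1 G1 a0 by (simp add: Fp_def Gp_def)
next
  case (Suc k)
  define F where "F = Fp a (Suc k)"
  define G where "G = Gp a (Suc k)"
  have a0: "a \<noteq> 0" using d2[of 0] by simp
  have F0: "F \<noteq> 0" using f_nz[of "3*k+2"] Suc.IH by (simp add: fseq_def F_def)
  have G0: "G \<noteq> 0" using g_nz[of "3*k+2"] Suc.IH by (simp add: gseq_def G_def)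
  have FS: "Fp a k * (of_nat k + 2*a) / (of_nat (Suc k) - a) = F" using Fp_Suc F_def by simp
  have kf: "of_nat (Suc k) - a \<noteq> 0"
  proof
    assume "of_nat (Suc k) - a = 0"
    hence "F = 0" using FS by simp
    thus False using F0 by simp
  qed
  have e2: "ufvg a (3*k+2) = ((of_nat k + 2*a) / a * Fp a k, (of_nat k + 1 - a) / a * G, F, G)"
    using Suc.IH by (simp add: F_def G_def)
  have u3: "(of_nat k + 2*a) / a * Fp a k + F = of_nat (Suc k) / a * F"
    using FS kf a0 by (simp add: field_simps)
  have v3: "(of_nat k + 1 - a) / a * G + G = of_nat (Suc k) / a * G"
    using a0 by (simp add: field_simps)
  have e3: "ufvg a (Suc (3*k+2)) = (of_nat (Suc k) / a * F, of_nat (Suc k) / a * G, F, G)"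
  proof -
    have "ufvg a (Suc (3*k+2)) = (of_nat (Suc k) / a * F, of_nat (Suc k) / a * G,
       of_nat (Suc k) / a * F / (of_nat (Suc k) / a * G) * G,
       a * (of_nat (Suc k) / a * G) / (of_nat (Suc (3*k+2)) - a * (of_nat (Suc k) / a * F) / F - a * (of_nat (Suc k) / a * G) / G))"
      using ufvg_Suc_eq[OF e2] u3 v3 by simp
    moreover have "of_nat (Suc (3*k+2)) - a * (of_nat (Suc k) / a * F) / F - a * (of_nat (Suc k) / a * G) / G = (of_nat (Suc k) :: complex)"
      using a0 F0 G0 by (simp add: field_simps)
    ultimately show ?thesis using a0 F0 G0 by (simp add: field_simps del: of_nat_Suc)
  qed
  have e3': "ufvg a (3 * Suc k) = (of_nat (Suc k) / a * Fp a (Suc k), of_nat (Suc k) / a * Gp a (Suc k), Fp a (Suc k), Gp a (Suc k))"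
  proof -
    have "3 * Suc k = Suc (3*k+2)" by simp
    then show ?thesis unfolding F_def[symmetric] G_def[symmetric] by (simp only: e3)
  qed
  define m where "m = Suc k"
  have e0: "ufvg a (3*m) = (of_nat m / a * F, of_nat m / a * G, F, G)"
    using e3' by (simp add: F_def G_def m_def)
  have ma: "of_nat m + a \<noteq> 0" using d2 by blast
  have u1: "of_nat m / a * F + F = (of_nat m + a) / a * F" using a0 by (simp add: field_simps)
  have v1: "of_nat m / a * G + G = (of_nat m + a) / a * G" using a0 by (simp add: field_simps)
  have den1: "of_nat (Suc (3*m)) - a * ((of_nat m + a) / a * F) / F - a * ((of_nat m + a) / a * G) / G
     = of_nat m + 1 - 2*a"
    using a0 F0 G0 by (simp add: field_simps)
  have e1: "ufvg a (Suc (3*m)) = ((of_nat m + a) / a * F, (of_nat m + a) / a * G,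
      (of_nat m + a) / a * F / ((of_nat m + a) / a * G) * G,
      a * ((of_nat m + a) / a * G) / (of_nat m + 1 - 2*a))"
    using ufvg_Suc_eq[OF e0] u1 v1 den1 by simp
  have "gden a (Suc (3*m)) = of_nat m + 1 - 2*a"
    using e0 e1 den1 by (simp add: gden_def useq_def vseq_def fseq_def gseq_def)
  hence m2: "of_nat m + 1 - 2*a \<noteq> 0" using gden_nz[of "Suc (3*m)"] by simp
  define G1 where "G1 = Gp a (Suc m)"
  have G1e: "G1 = G * (of_nat m + a) / (of_nat m + 1 - 2*a)"
    using Gp_Suc[of a m] by (simp add: G1_def G_def m_def add.commute)
  have f1: "(of_nat m + a) / a * F / ((of_nat m + a) / a * G) * G = F"
  proof -
    have c: "(of_nat m + a) / a \<noteq> 0" using a0 ma by simp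
    show ?thesis using c G0 by simp
  qed
  have g1: "a * ((of_nat m + a) / a * G) / (of_nat m + 1 - 2*a) = G1"
  proof -
    have "a * ((of_nat m + a) / a * G) = G * (of_nat m + a)" using a0 by simp
    then show ?thesis unfolding G1e by simp
  qed
  have e1': "ufvg a (Suc (3*m)) = ((of_nat m + a) / a * F, (of_nat m + a) / a * G, F, G1)"
    using e1 f1 g1 by simp
  have G10: "G1 \<noteq> 0" using g_nz[of "Suc (3*m)"] e1' by (simp add: gseq_def)
  have u2: "(of_nat m + a) / a * F + F = (of_nat m + 2*a) / a * F" using a0 by (simp add: field_simps)
  have v2: "(of_nat m + a) / a * G + G1 = (of_nat m + 1 - a) / a * G1"
    using G1e a0 m2 by (simp add: field_simps)
  have "vseq a (Suc (Suc (3*m))) = (of_nat m + 1 - a) / a * G1"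
    using ufvg_Suc_eq[OF e1'] v2 by (simp add: vseq_def)
  hence m1: "of_nat m + 1 - a \<noteq> 0" using v_nz[of "Suc (Suc (3*m))"] by auto
  define F1 where "F1 = Fp a (Suc m)"
  have F1e: "F1 = F * (of_nat m + 2*a) / (of_nat m + 1 - a)"
    using Fp_Suc[of a m] by (simp add: F1_def F_def m_def add.commute)
  have f2: "(of_nat m + 2*a) / a * F / ((of_nat m + 1 - a) / a * G1) * G1 = F1"
    unfolding F1e using a0 G10 m1 by (simp add: divide_simps)
  have den2: "of_nat (Suc (Suc (3*m))) - a * ((of_nat m + 2*a) / a * F) / F - a * ((of_nat m + 1 - a) / a * G1) / G1
     = of_nat m + 1 - a"
    using a0 F0 G10 by (simp add: field_simps)
  have g2: "a * ((of_nat m + 1 - a) / a * G1) / (of_nat m + 1 - a) = G1"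
  proof -
    have "a * ((of_nat m + 1 - a) / a * G1) = (of_nat m + 1 - a) * G1" using a0 by simp
    then show ?thesis using m1 by simp
  qed
  have e2': "ufvg a (Suc (Suc (3*m))) = ((of_nat m + 2*a) / a * F, (of_nat m + 1 - a) / a * G1, F1, G1)"
    using ufvg_Suc_eq[OF e1'] unfolding u2 v2 f2 den2 g2 .
  show ?case
    using e3' e1' e2' by (simp add: F_def G_def F1_def G1_def m_def del: of_nat_Suc)
qed

theorem corollary24:
  fixes a :: complex
  assumes v_nz: "\<And>k. k \<ge> 1 \<Longrightarrow> vseq a k \<noteq> 0"
      and f_nz: "\<And>k. fseq a k \<noteq> 0"
      and g_nz: "\<And>k. gseq a k \<noteq> 0"
      and gden_nz: "\<And>k. k \<ge> 1 \<Longrightarrow> gden a k \<noteq> 0"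
      and d1: "1 - 2 * a \<noteq> 0"
      and d2: "\<And>j::nat. of_nat j + a \<noteq> 0"
      and d3: "\<And>j::nat. of_nat j + 2 * a \<noteq> 0"
  shows "(\<forall>k::nat. k \<ge> 1 \<longrightarrow>
            wseq a (3*k - 1) = (of_nat k - 1 + 2*a) / (1 - 2*a) * Pi3 a k
          \<and> hseq a (3*k - 1) = Pi3 a k)
       \<and> (\<forall>k::nat.
            wseq a (3*k) = of_nat k / (1 - 2*a) * Pi3 a k
          \<and> wseq a (3*k + 1) = (of_nat k + 1 - 2*a) / (1 - 2*a) * Pi3 a k
          \<and> hseq a (3*k) = Pi3 a k
          \<and> hseq a (3*k + 1) = (of_nat k + 1 - 2*a) / (of_nat k + a) * Pi3 a k)"
proof -
  have M: "\<And>k. ufvg a (3*k) = (of_nat k / a * Fp a k, of_nat k / a * Gp a k, Fp a k, Gp a k)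
       \<and> ufvg a (3*k+1) = ((of_nat k + a) / a * Fp a k, (of_nat k + a) / a * Gp a k, Fp a k, Gp a (Suc k))
       \<and> ufvg a (3*k+2) = ((of_nat k + 2*a) / a * Fp a k, (of_nat k + 1 - a) / a * Gp a (Suc k), Fp a (Suc k), Gp a (Suc k))"
    using main[OF v_nz f_nz g_nz gden_nz d2] by blast
  have h0: "hseq a (3*k) = Pi3 a k" for k
    using M[of k] by (simp add: hseq_def fseq_def gseq_def Pi3_FG)
  have h2: "hseq a (3*k+2) = Pi3 a (Suc k)" for k
    using M[of k] by (simp add: hseq_def fseq_def gseq_def Pi3_FG)
  have h1: "hseq a (3*k+1) = (of_nat k + 1 - 2*a) / (of_nat k + a) * Pi3 a k" for k
  proof -
    have "hseq a (3*k+1) = inverse (Fp a k * Gp a (Suc k))"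
      using M[of k] by (simp add: hseq_def fseq_def gseq_def)
    also have "\<dots> = (of_nat k + 1 - 2*a) / (of_nat k + a) * Pi3 a k"
      by (simp add: Gp_Suc Pi3_FG inverse_mult_distrib divide_inverse mult_ac add_ac)
    finally show ?thesis .
  qed
  have P: "Pi3 a (Suc k) = Pi3 a k * (of_nat k + 1 - a) * (of_nat k + 1 - 2*a) / ((of_nat k + a) * (of_nat k + 2*a))" for k
    by (simp add: Fp_Suc Gp_Suc Pi3_FG inverse_mult_distrib divide_inverse mult_ac add_ac)
  have W: "wseq a (3*k) = of_nat k / (1 - 2*a) * Pi3 a k" for k
  proof (induction k)
    case 0 then show ?case by simp
  next
    case (Suc k)
    have ka: "of_nat k + a \<noteq> 0" using d2 by blast
    have k2a: "of_nat k + 2*a \<noteq> 0" using d3 by blast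
    have "wseq a (3 * Suc k) = wseq a (3*k) + hseq a (3*k) + hseq a (3*k+1) + hseq a (3*k+2)"
      by (simp add: numeral_3_eq_3)
    also have "\<dots> = of_nat k / (1 - 2*a) * Pi3 a k + Pi3 a k + (of_nat k + 1 - 2*a) / (of_nat k + a) * Pi3 a k
       + Pi3 a k * (of_nat k + 1 - a) * (of_nat k + 1 - 2*a) / ((of_nat k + a) * (of_nat k + 2*a))"
      using Suc.IH h0 h1 h2 P by simp
    also have "\<dots> = of_nat (Suc k) / (1 - 2*a) * (Pi3 a k * (of_nat k + 1 - a) * (of_nat k + 1 - 2*a) / ((of_nat k + a) * (of_nat k + 2*a)))"
      using alg1[OF ka k2a d1, of "Pi3 a k"] by simp
    finally show ?case using P by simp
  qed
  have W1: "wseq a (3*k+1) = (of_nat k + 1 - 2*a) / (1 - 2*a) * Pi3 a k" for k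
  proof -
    have "wseq a (3*k+1) = wseq a (3*k) + hseq a (3*k)" by simp
    also have "\<dots> = (of_nat k + 1 - 2*a) / (1 - 2*a) * Pi3 a k"
      using W h0 d1 by (simp add: field_simps)
    finally show ?thesis .
  qed
  have W2: "wseq a (3*k+2) = (of_nat (Suc k) - 1 + 2*a) / (1 - 2*a) * Pi3 a (Suc k)" for k
  proof -
    have ka: "of_nat k + a \<noteq> 0" using d2 by blast
    have k2a: "of_nat k + 2*a \<noteq> 0" using d3 by blast
    have "wseq a (3*k+2) = wseq a (3*k+1) + hseq a (3*k+1)"
      by (simp add: numeral_2_eq_2)
    also have "\<dots> = (of_nat k + 1 - 2*a) / (1 - 2*a) * Pi3 a k + (of_nat k + 1 - 2*a) / (of_nat k + a) * Pi3 a k"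
      using W1 h1 by simp
    also have "\<dots> = (of_nat (Suc k) - 1 + 2*a) / (1 - 2*a) * (Pi3 a k * (of_nat k + 1 - a) * (of_nat k + 1 - 2*a) / ((of_nat k + a) * (of_nat k + 2*a)))"
      using alg2[OF ka k2a d1, of "Pi3 a k"] by simp
    finally show ?thesis using P by simp
  qed
  have A: "\<forall>k::nat. k \<ge> 1 \<longrightarrow>
            wseq a (3*k - 1) = (of_nat k - 1 + 2*a) / (1 - 2*a) * Pi3 a k
          \<and> hseq a (3*k - 1) = Pi3 a k"
  proof (intro allI impI)
    fix k :: nat assume "k \<ge> 1"
    then obtain m where k: "k = Suc m" by (cases k) auto
    have e: "3*k - 1 = 3*m+2" using k by simp
    show "wseq a (3*k - 1) = (of_nat k - 1 + 2*a) / (1 - 2*a) * Pi3 a k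
          \<and> hseq a (3*k - 1) = Pi3 a k"
      unfolding e using W2[of m] h2[of m] k by simp
  qed
  show ?thesis using A W W1 h0 h1 by simp
qed

end
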